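(* Let $n$ be a positive integer, $q=2^n$, and $A,B,\delta\in\mathbb{F}_q$ with $A\neq0$ and $\frac{B^2}{A^2}+\frac{B}{A}+\delta\neq0$. Let $\mathcal{S}=\sum_{x\in\mathbb{F}_q}(-1)^{\mathrm{Tr}_1^n\left(\frac{Ax+B}{x^2+x+\delta}\right)}$ and let $C=(AB+A^2\delta)^{1/2}$ (the unique square root in $\mathbb{F}_q$). Then: (1) if $\mathrm{Tr}_1^n(\delta)=1$, $\mathcal{S}=(-1)^{\mathrm{Tr}_1^n(A)}+(-1)^{\mathrm{Tr}_1^n(\frac{B+C}{A})}-\mathcal{K}_n(B+C)(-1)^{\mathrm{Tr}_1^n(A)}$; (2) if $\mathrm{Tr}_1^n(\delta)=0$, $\mathcal{S}=-(-1)^{\mathrm{Tr}_1^n(A)}-(-1)^{\mathrm{Tr}_1^n(\frac{B+C}{A})}+\mathcal{K}_n(B+C)(-1)^{\mathrm{Tr}_1^n(A)}+2$.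
   Context: $\mathrm{Tr}_1^n$ is the absolute trace of $\mathbb{F}_{2^n}$. Division by zero uses the convention $\frac10=0$ (in particular the summand is $(-1)^0=1$ when $x^2+x+\delta=0$). The binary Kloosterman sum is $\mathcal{K}_n(a)=\sum_{x\in\mathbb{F}_{2^n}}(-1)^{\mathrm{Tr}_1^n(\frac1x+ax)}$. *)

theory Defs
  imports Main
begin

text \<open>Finite fields of characteristic 2 are modelled by a type of class field and finite
with 1 + 1 = 0 and CARD = 2^n.\<close>

definition abs_trace :: "nat \<Rightarrow> 'a::field \<Rightarrow> 'a" where
  "abs_trace n x = (\<Sum>i<n. x ^ (2 ^ i))"

definition chi :: "nat \<Rightarrow> 'a::field \<Rightarrow> int" where
  "chi n x = (if abs_trace n x = 0 then 1 else -1)"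

text \<open>Binary Kloosterman sum; division by zero is 0 in Isabelle, matching 1/0 = 0.\<close>
definition kloosterman :: "nat \<Rightarrow> 'a::{field,finite} \<Rightarrow> int" where
  "kloosterman n a = (\<Sum>x\<in>(UNIV::'a set). chi n (1 / x + a * x))"

end

theory Submission
  imports Defs "HOL-Computational_Algebra.Polynomial"
begin


lemma c2_add_self:
  fixes x :: "'a::field"
  assumes c2: "(1::'a) + 1 = 0"
  shows "x + x = 0"
proof -
  have "x + x = (1 + 1) * x" by (simp add: distrib_right)
  thus ?thesis using c2 by simp
qed

lemma c2_minus:
  fixes x :: "'a::field"
  assumes c2: "(1::'a) + 1 = 0"
  shows "- x = x"
  by (rule minus_unique[OF c2_add_self[OF c2]])

lemma c2_sq_add:
  fixes x y :: "'a::field"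
  assumes c2: "(1::'a) + 1 = 0"
  shows "(x + y)^2 = x^2 + y^2"
proof -
  have "(x+y)^2 = x^2 + y^2 + (x*y + x*y)" by (simp add: power2_eq_square algebra_simps)
  thus ?thesis using c2_add_self[OF c2, of "x*y"] by simp
qed

lemma c2_pow2_add:
  fixes x y :: "'a::field"
  assumes c2: "(1::'a) + 1 = 0"
  shows "(x + y)^(2^i) = x^(2^i) + y^(2^i)"
proof (induction i)
  case 0 then show ?case by simp
next
  case (Suc i)
  have "(x + y)^(2^Suc i) = ((x+y)^(2^i))^2" by (simp add: power_mult[symmetric] mult.commute)
  also have "\<dots> = (x^(2^i))^2 + (y^(2^i))^2" using Suc c2_sq_add[OF c2] by simp
  also have "\<dots> = x^(2^Suc i) + y^(2^Suc i)" by (simp add: power_mult[symmetric] mult.commute)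
  finally show ?case .
qed

lemma c2_sq_sum:
  fixes f :: "nat \<Rightarrow> 'a::field"
  assumes c2: "(1::'a) + 1 = 0"
  shows "(\<Sum>i\<in>I. f i)^2 = (\<Sum>i\<in>I. (f i)^2)"
proof (induction I rule: infinite_finite_induct)
  case (insert x F) then show ?case by (simp add: c2_sq_add[OF c2])
qed auto

lemma trace_add:
  fixes x y :: "'a::field"
  assumes c2: "(1::'a) + 1 = 0"
  shows "abs_trace n (x + y) = abs_trace n x + abs_trace n y"
  unfolding abs_trace_def by (simp add: c2_pow2_add[OF c2] sum.distrib)

lemma fermat_type:
  fixes x :: "'a::{field,finite}"
  shows "x ^ card (UNIV::'a set) = x"
proof (cases "x = 0")
  case True then show ?thesis by (simp add: finite_UNIV_card_ge_0)
next
  case False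
  let ?S = "UNIV - {0::'a}"
  have e1: "(\<Prod>y\<in>?S. x * y) = (\<Prod>y\<in>?S. y)"
    by (rule prod.reindex_bij_witness[where i="\<lambda>y. y / x" and j="\<lambda>y. x * y"]) (use False in auto)
  have e2: "(\<Prod>y\<in>?S. x * y) = x ^ card ?S * (\<Prod>y\<in>?S. y)"
    by (simp only: prod.distrib prod_constant)
  have e3: "(\<Prod>y\<in>?S. y) \<noteq> 0" by simp
  have "x ^ card ?S * (\<Prod>y\<in>?S. y) = 1 * (\<Prod>y\<in>?S. y)" using e1 e2 by simp
  hence e4: "x ^ card ?S = 1" using e3 by (rule mult_right_cancel[THEN iffD1, rotated])
  have e5: "card (UNIV::'a set) = Suc (card ?S)"
    using card_Suc_Diff1[of "UNIV::'a set" 0] by simp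
  show ?thesis unfolding e5 power_Suc e4 by simp
qed



lemma trace_sq:
  fixes x :: "'a::{field,finite}"
  assumes card: "card (UNIV::'a set) = 2 ^ n"
  shows "abs_trace n (x^2) = abs_trace n x"
proof -
  have "(\<Sum>i<Suc n. x^(2^i)) = x + (\<Sum>i<n. x^(2^Suc i))"
    by (subst sum.lessThan_Suc_shift) simp
  moreover have "(\<Sum>i<Suc n. x^(2^i)) = abs_trace n x + x"
    using fermat_type[of x] card by (simp add: abs_trace_def)
  moreover have "abs_trace n (x^2) = (\<Sum>i<n. x^(2^Suc i))"
    unfolding abs_trace_def by (simp add: power_mult[symmetric] mult.commute)
  ultimately show ?thesis by (simp add: add.commute)
qed

lemma trace_square_eq:
  fixes x :: "'a::{field,finite}"
  assumes c2: "(1::'a) + 1 = 0"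
  assumes card: "card (UNIV::'a set) = 2 ^ n"
  shows "(abs_trace n x)^2 = abs_trace n x"
proof -
  have "(abs_trace n x)^2 = (\<Sum>i<n. (x^(2^i))^2)"
    unfolding abs_trace_def by (rule c2_sq_sum[OF c2])
  also have "\<dots> = abs_trace n (x^2)"
    unfolding abs_trace_def by (simp add: power_mult[symmetric] mult.commute)
  also have "\<dots> = abs_trace n x" by (rule trace_sq[OF card])
  finally show ?thesis .
qed

lemma trace01:
  fixes x :: "'a::{field,finite}"
  assumes c2: "(1::'a) + 1 = 0"
  assumes card: "card (UNIV::'a set) = 2 ^ n"
  shows "abs_trace n x = 0 \<or> abs_trace n x = 1"
proof -
  let ?t = "abs_trace n x"
  have "?t * (?t - 1) = 0" using trace_square_eq[OF c2 card, of x]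
    by (simp add: power2_eq_square algebra_simps)
  thus ?thesis by simp
qed

lemma chi_add:
  fixes x y :: "'a::{field,finite}"
  assumes c2: "(1::'a) + 1 = 0"
  assumes card: "card (UNIV::'a set) = 2 ^ n"
  shows "chi n (x + y) = chi n x * chi n y"
  using trace01[OF c2 card, of x] trace01[OF c2 card, of y] c2
  unfolding chi_def trace_add[OF c2] by auto

lemma chi_sq:
  fixes x :: "'a::{field,finite}"
  assumes card: "card (UNIV::'a set) = 2 ^ n"
  shows "chi n (x^2) = chi n x"
  unfolding chi_def trace_sq[OF card] ..

lemma chi_0: "chi n 0 = 1"
  by (simp add: chi_def abs_trace_def power_0_left)

lemma chi_pm: "chi n x = 1 \<or> chi n x = -1"
  by (simp add: chi_def)

lemma trace_nonzero_exists:
  fixes dummy :: "'a::{field,finite}"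
  assumes n: "n > 0"
  assumes card: "card (UNIV::'a set) = 2 ^ n"
  shows "\<exists>a::'a. abs_trace n a \<noteq> 0"
proof (rule ccontr)
  assume H: "\<not> ?thesis"
  define p :: "'a poly" where "p = (\<Sum>i<n. monom 1 (2^i))"
  have ev: "poly p x = abs_trace n x" for x
    unfolding p_def abs_trace_def by (simp add: poly_sum poly_monom)
  have cf: "coeff p (2^(n-1)) = 1"
  proof -
    have "coeff p (2^(n-1)) = (\<Sum>i<n. if 2^i = (2::nat)^(n-1) then 1 else 0)"
      unfolding p_def by (simp add: coeff_sum coeff_monom)
    also have "\<dots> = (\<Sum>i\<in>{n-1}. 1)"
      by (rule sum.mono_neutral_cong_right) (use n in auto)
    finally show ?thesis by simp
  qed
  hence p0: "p \<noteq> 0" by auto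
  have dg: "degree p \<le> 2^(n-1)"
    unfolding p_def
  proof (rule degree_sum_le)
    fix i assume "i \<in> {..<n}"
    hence "(2::nat)^i \<le> 2^(n-1)" by (intro power_increasing) auto
    thus "degree (monom (1::'a) (2^i)) \<le> 2^(n-1)" by (simp add: degree_monom_eq)
  qed simp
  have "{x. poly p x = 0} = UNIV" using H ev by auto
  hence "card (UNIV::'a set) \<le> 2^(n-1)" using card_poly_roots_bound[OF p0] dg by simp
  moreover have "(2::nat)^(n-1) < 2^n" using n by (intro power_strict_increasing) auto
  ultimately show False using card by linarith
qed

lemma sum_chi:
  fixes dummy :: "'a::{field,finite}"
  assumes n: "n > 0"
  assumes c2: "(1::'a) + 1 = 0"
  assumes card: "card (UNIV::'a set) = 2 ^ n"
  shows "(\<Sum>v\<in>(UNIV::'a set). chi n v) = 0"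
proof -
  obtain a :: 'a where a: "abs_trace n a \<noteq> 0" using trace_nonzero_exists[OF n card] by blast
  have ca: "chi n a = -1" using a by (simp add: chi_def)
  have "(\<Sum>v\<in>(UNIV::'a set). chi n v) = (\<Sum>v\<in>(UNIV::'a set). chi n (v + a))"
    by (rule sum.reindex_bij_witness[where i="\<lambda>v. v + a" and j="\<lambda>v. v + a"]) (auto simp: add.assoc c2_add_self[OF c2])
  also have "\<dots> = - (\<Sum>v\<in>(UNIV::'a set). chi n v)"
    by (simp add: chi_add[OF c2 card] ca sum_negf)
  finally show ?thesis by simp
qed



lemma root_pair:
  fixes z0 d :: "'a::field"
  assumes c2: "(1::'a) + 1 = 0"
  assumes r: "z0^2 + z0 + d = 0"
  shows "{z. z^2 + z + d = 0} = {z0, z0 + 1}"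
proof -
  have id: "(z+z0)*(z+z0+1) = (z^2+z+d) + (z0^2+z0+d) + (1+1)*(z*z0 - d)" for z
    by (simp add: power2_eq_square algebra_simps)
  have "(z+z0)*(z+z0+1) = z^2 + z + d" for z
    using id[of z] unfolding r c2 by simp
  hence "z^2 + z + d = 0 \<longleftrightarrow> (z+z0)*(z+z0+1) = 0" for z by simp
  moreover have "z + z0 = 0 \<longleftrightarrow> z = z0" for z
    using c2_minus[OF c2, of z0] by (metis add_eq_0_iff2 add.commute)
  moreover have "z + z0 + 1 = 0 \<longleftrightarrow> z = z0 + 1" for z
    using c2_minus[OF c2, of "z0+1"] by (metis add_eq_0_iff2 add.commute add.assoc)
  ultimately show ?thesis by auto
qed

lemma root_trace:
  fixes z0 d :: "'a::{field,finite}"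
  assumes c2: "(1::'a) + 1 = 0"
  assumes card: "card (UNIV::'a set) = 2 ^ n"
  assumes r: "z0^2 + z0 + d = 0"
  shows "abs_trace n d = 0"
proof -
  have "d = z0^2 + z0" using r c2_minus[OF c2, of d]
    by (metis add_eq_0_iff2 add.commute)
  hence "abs_trace n d = abs_trace n z0 + abs_trace n z0"
    by (simp add: trace_add[OF c2] trace_sq[OF card])
  thus ?thesis using c2_add_self[OF c2] by simp
qed

lemma card_trace0:
  fixes dummy :: "'a::{field,finite}"
  assumes n: "n > 0"
  assumes c2: "(1::'a) + 1 = 0"
  assumes card: "card (UNIV::'a set) = 2 ^ n"
  shows "2 * card {d::'a. abs_trace n d = 0} = card (UNIV::'a set)"
proof -
  let ?K = "{d::'a. abs_trace n d = 0}"
  have "0 = (\<Sum>v\<in>(UNIV::'a set). chi n v)" using sum_chi[OF n c2 card] by simp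
  also have "\<dots> = (\<Sum>v\<in>(UNIV::'a set). if abs_trace n v = 0 then 1 else -1)"
    by (simp add: chi_def)
  also have "\<dots> = int (card ?K) - int (card (- ?K))"
    by (subst sum.If_cases) (simp_all add: Collect_neg_eq)
  finally have "card ?K = card (- ?K)" by simp
  moreover have "card ?K + card (- ?K) = card (UNIV::'a set)"
    using card_Un_disjoint[of ?K "- ?K"] by (simp add: Compl_partition)
  ultimately show ?thesis by simp
qed

lemma h90_exists:
  fixes d :: "'a::{field,finite}"
  assumes n: "n > 0"
  assumes c2: "(1::'a) + 1 = 0"
  assumes card: "card (UNIV::'a set) = 2 ^ n"
  assumes t: "abs_trace n d = 0"
  shows "\<exists>z. z^2 + z + d = 0"
proof -
  define L where "L = (\<lambda>z::'a. z^2 + z)"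
  have fib: "card {z. L z = e} = 2" if "e \<in> range L" for e
  proof -
    obtain z0 where e: "e = L z0" using \<open>e \<in> range L\<close> by auto
    have r: "z0^2 + z0 + e = 0" using e c2_add_self[OF c2, of e] by (simp add: L_def)
    have "{z. L z = e} = {z. z^2 + z + e = 0}"
    proof -
      have "L z = e \<longleftrightarrow> z^2 + z + e = 0" for z
        using c2_minus[OF c2, of e] unfolding L_def by (metis add_eq_0_iff2 add.commute)
      thus ?thesis by auto
    qed
    also have "\<dots> = {z0, z0+1}" by (rule root_pair[OF c2 r])
    finally show ?thesis by simp
  qed
  have "card (UNIV::'a set) = (\<Sum>e\<in>range L. card {z. L z = e})"
    using sum.image_gen[of "UNIV::'a set" "\<lambda>_. (1::nat)" L] by simp
  also have "\<dots> = 2 * card (range L)" using fib by simp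
  finally have c1: "card (UNIV::'a set) = 2 * card (range L)" .
  have sub: "range L \<subseteq> {d. abs_trace n d = 0}"
  proof
    fix e assume "e \<in> range L"
    then obtain z0 where e: "e = L z0" by auto
    have r: "z0^2 + z0 + e = 0" using e c2_add_self[OF c2, of e] by (simp add: L_def)
    show "e \<in> {d. abs_trace n d = 0}" using root_trace[OF c2 card r] by simp
  qed
  have "range L = {d. abs_trace n d = 0}"
    by (rule card_subset_eq[OF _ sub]) (use c1 card_trace0[OF n c2 card] in auto)
  then obtain z where "d = L z" using t by auto
  hence "z^2 + z + d = 0" using c2_add_self[OF c2, of d] by (simp add: L_def)
  thus ?thesis by blast
qed

lemma h90_card:
  fixes d :: "'a::{field,finite}"
  assumes n: "n > 0"
  assumes c2: "(1::'a) + 1 = 0"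
  assumes card: "card (UNIV::'a set) = 2 ^ n"
  shows "int (card {z. z^2 + z + d = 0}) = 1 + chi n d"
proof (cases "abs_trace n d = 0")
  case True
  then obtain z0 where r: "z0^2 + z0 + d = 0" using h90_exists[OF n c2 card] by blast
  have "z0 \<noteq> z0 + 1" by simp
  then show ?thesis using root_pair[OF c2 r] True by (simp add: chi_def)
next
  case False
  hence "{z. z^2 + z + d = 0} = {}" using root_trace[OF c2 card] by blast
  then show ?thesis using False by (simp add: chi_def)
qed

lemma quad_card:
  fixes a b c :: "'a::{field,finite}"
  assumes n: "n > 0"
  assumes c2: "(1::'a) + 1 = 0"
  assumes card: "card (UNIV::'a set) = 2 ^ n"
  assumes a: "a \<noteq> 0" and b: "b \<noteq> 0"
  shows "int (card {y. a * y^2 + b * y + c = 0}) = 1 + chi n (a * c / b^2)"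
proof -
  have eq: "a * y^2 + b * y + c = 0 \<longleftrightarrow> (a*y/b)^2 + (a*y/b) + a*c/b^2 = 0" for y
  proof -
    have "(a*y/b)^2 + (a*y/b) + a*c/b^2 = (a/b^2) * (a * y^2 + b * y + c)"
      using a b by (simp add: field_simps power2_eq_square)
    thus ?thesis using a b by simp
  qed
  have "bij_betw (\<lambda>y. a*y/b) {y. a * y^2 + b * y + c = 0} {z. z^2 + z + a*c/b^2 = 0}"
  proof (rule bij_betw_byWitness[where f'="\<lambda>z. b*z/a"])
    show "\<forall>y\<in>{y. a * y^2 + b * y + c = 0}. b * (a * y / b) / a = y" using a b by simp
    show "\<forall>z\<in>{z. z^2 + z + a*c/b^2 = 0}. a * (b * z / a) / b = z" using a b by simp
    show "(\<lambda>y. a * y / b) ` {y. a * y^2 + b * y + c = 0} \<subseteq> {z. z^2 + z + a*c/b^2 = 0}"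
      using eq by auto
    show "(\<lambda>z. b * z / a) ` {z. z^2 + z + a*c/b^2 = 0} \<subseteq> {y. a * y^2 + b * y + c = 0}"
    proof
      fix y assume "y \<in> (\<lambda>z. b * z / a) ` {z. z^2 + z + a*c/b^2 = 0}"
      then obtain z where z: "z^2 + z + a*c/b^2 = 0" and y: "y = b*z/a" by auto
      have "a*y/b = z" using y a b by simp
      thus "y \<in> {y. a * y^2 + b * y + c = 0}" using eq[of y] z by simp
    qed
  qed
  hence "card {y. a * y^2 + b * y + c = 0} = card {z. z^2 + z + a*c/b^2 = 0}"
    by (rule bij_betw_same_card)
  thus ?thesis using h90_card[OF n c2 card] by simp
qed



lemma c2_add_eq0:
  fixes x y :: "'a::field"
  assumes c2: "(1::'a) + 1 = 0"
  shows "x + y = 0 \<longleftrightarrow> x = y"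
  using c2_minus[OF c2, of y] by (metis add_eq_0_iff2)

lemma fiber_sum:
  fixes h :: "'a::finite \<Rightarrow> 'b::finite"
  shows "(\<Sum>y\<in>UNIV. g (h y)) = (\<Sum>v\<in>UNIV. (g v :: int) * int (card {y. h y = v}))"
proof -
  have "(\<Sum>y\<in>UNIV. g (h y)) = (\<Sum>y\<in>UNIV. \<Sum>v\<in>UNIV. if h y = v then g v else 0)"
    by simp
  also have "\<dots> = (\<Sum>v\<in>UNIV. \<Sum>y\<in>UNIV. if h y = v then g v else 0)"
    by (rule sum.swap)
  also have "\<dots> = (\<Sum>v\<in>UNIV. g v * int (card {y. h y = v}))"
    by (rule sum.cong) (simp_all add: sum.If_cases)
  finally show ?thesis .
qed

lemma fiber_count:
  fixes A t v :: "'a::{field,finite}"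
  assumes n: "n > 0"
  assumes c2: "(1::'a) + 1 = 0"
  assumes card: "card (UNIV::'a set) = 2 ^ n"
  assumes A: "A \<noteq> 0" and t: "t \<noteq> 0"
  shows "int (card {y. A * y / (y^2 + y + t^2) = v})
     = 1 + chi n (v * t / (v + A)) + (if v = 0 then chi n t else 0) - (if v = A then 1 else 0)"
proof -
  have t2: "t^2 \<noteq> 0" using t by simp
  consider "v = 0" | "v = A" | "v \<noteq> 0" "v \<noteq> A" by blast
  then show ?thesis
  proof cases
    case 1
    have "{y. A * y / (y^2 + y + t^2) = v} = insert 0 {y. y^2 + y + t^2 = 0}"
      using 1 A by auto
    moreover have "0 \<notin> {y. y^2 + y + t^2 = 0}" using t2 by simp
    ultimately have "int (card {y. A * y / (y^2 + y + t^2) = v}) = 1 + int (card {y. y^2 + y + t^2 = 0})"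
      by simp
    also have "\<dots> = 2 + chi n t" using h90_card[OF n c2 card, of "t^2"] chi_sq[OF card, of t] by simp
    finally show ?thesis using 1 A by (simp add: chi_0)
  next
    case 2
    have "{y. A * y / (y^2 + y + t^2) = v} = {t}"
    proof -
      have "A * y / (y^2 + y + t^2) = A \<longleftrightarrow> y = t" for y
      proof
        assume h: "A * y / (y^2 + y + t^2) = A"
        hence D: "y^2 + y + t^2 \<noteq> 0" using A by auto
        hence "A * y = A * (y^2 + y + t^2)" using h by (simp add: field_simps)
        hence "y = y^2 + y + t^2" using A by simp
        hence "y^2 + t^2 = 0" by (simp add: algebra_simps)
        hence "(y + t)^2 = 0" by (simp add: c2_sq_add[OF c2])
        hence "y + t = 0" by simp
        thus "y = t" by (simp add: c2_add_eq0[OF c2])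
      next
        assume "y = t"
        moreover have "t^2 + t + t^2 = t" using c2_add_self[OF c2, of "t^2"] by (simp add: algebra_simps)
        ultimately show "A * y / (y^2 + y + t^2) = A" using t by simp
      qed
      thus ?thesis using 2 by auto
    qed
    moreover have "A + A = 0" by (rule c2_add_self[OF c2])
    ultimately show ?thesis using 2 A by (simp add: chi_0)
  next
    case 3
    have vA: "v + A \<noteq> 0" using 3 by (simp add: c2_add_eq0[OF c2])
    have "{y. A * y / (y^2 + y + t^2) = v} = {y. v * y^2 + (v + A) * y + v * t^2 = 0}"
    proof -
      have "A * y / (y^2 + y + t^2) = v \<longleftrightarrow> v * y^2 + (v + A) * y + v * t^2 = 0" for y
      proof
        assume h: "A * y / (y^2 + y + t^2) = v"
        hence D: "y^2 + y + t^2 \<noteq> 0" using 3 by auto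
        hence "A * y = v * (y^2 + y + t^2)" using h by (simp add: field_simps)
        hence "v * (y^2 + y + t^2) + A * y = 0" unfolding c2_add_eq0[OF c2] by simp
        thus "v * y^2 + (v + A) * y + v * t^2 = 0" by (simp add: algebra_simps)
      next
        assume h: "v * y^2 + (v + A) * y + v * t^2 = 0"
        hence "v * (y^2 + y + t^2) + A * y = 0" by (simp add: algebra_simps)
        hence e: "v * (y^2 + y + t^2) = A * y" by (simp add: c2_add_eq0[OF c2])
        have D: "y^2 + y + t^2 \<noteq> 0"
        proof
          assume D0: "y^2 + y + t^2 = 0"
          hence "y = 0" using e A by simp
          thus False using D0 t2 by simp
        qed
        show "A * y / (y^2 + y + t^2) = v" using e D by (simp add: field_simps)
      qed
      thus ?thesis by auto
    qed
    hence "int (card {y. A * y / (y^2 + y + t^2) = v}) = 1 + chi n (v * (v * t^2) / (v + A)^2)"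
      using quad_card[OF n c2 card \<open>v \<noteq> 0\<close> vA] by simp
    also have "v * (v * t^2) / (v + A)^2 = (v * t / (v + A))^2"
      by (simp add: power2_eq_square field_simps)
    finally show ?thesis using 3 chi_sq[OF card] by simp
  qed
qed



lemma main_S:
  fixes A t :: "'a::{field,finite}"
  assumes n: "n > 0"
  assumes c2: "(1::'a) + 1 = 0"
  assumes card: "card (UNIV::'a set) = 2 ^ n"
  assumes A: "A \<noteq> 0" and t: "t \<noteq> 0"
  shows "(\<Sum>y\<in>(UNIV::'a set). chi n (A * y / (y^2 + y + t^2)))
     = chi n A * chi n t * kloosterman n (A * t) - chi n A * chi n t + chi n t"
proof -
  let ?f = "\<lambda>v. chi n v * (1 + chi n (v * t / (v + A)) + (if v = 0 then chi n t else 0) - (if v = A then 1 else 0))"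
  have "(\<Sum>y\<in>(UNIV::'a set). chi n (A * y / (y^2 + y + t^2)))
      = (\<Sum>v\<in>(UNIV::'a set). chi n v * int (card {y. A * y / (y^2 + y + t^2) = v}))"
    by (rule fiber_sum)
  also have "\<dots> = (\<Sum>v\<in>(UNIV::'a set). ?f v)"
    using fiber_count[OF n c2 card A t] by simp
  also have "\<dots> = (\<Sum>v\<in>(UNIV::'a set). chi n v + chi n v * chi n (v * t / (v + A))
        + (if v = 0 then chi n v * chi n t else 0) - (if v = A then chi n v else 0))"
    by (rule sum.cong) (auto simp: algebra_simps)
  also have "\<dots> = (\<Sum>v\<in>(UNIV::'a set). chi n v) + (\<Sum>v\<in>(UNIV::'a set). chi n v * chi n (v * t / (v + A)))
        + (\<Sum>v\<in>(UNIV::'a set). if v = 0 then chi n v * chi n t else 0) - (\<Sum>v\<in>(UNIV::'a set). if v = A then chi n v else 0)"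
    by (simp add: sum.distrib sum_subtractf)
  also have "\<dots> = (\<Sum>v\<in>(UNIV::'a set). chi n (v + v * t / (v + A))) + chi n t - chi n A"
    by (simp add: sum_chi[OF n c2 card] chi_add[OF c2 card] chi_0)
  also have "(\<Sum>v\<in>(UNIV::'a set). chi n (v + v * t / (v + A))) = (\<Sum>u\<in>(UNIV::'a set). chi n (u + A + (u + A) * t / u))"
    by (rule sum.reindex_bij_witness[where i="\<lambda>v. v + A" and j="\<lambda>v. v + A"])
       (auto simp: add.assoc c2_add_self[OF c2])
  also have "\<dots> = (\<Sum>u\<in>(UNIV::'a set). chi n (A + t) * chi n (u + A * t / u) + (if u = 0 then chi n A - chi n (A + t) else 0))"
  proof (rule sum.cong)
    fix u :: 'a
    show "chi n (u + A + (u + A) * t / u) = chi n (A + t) * chi n (u + A * t / u) + (if u = 0 then chi n A - chi n (A + t) else 0)"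
    proof (cases "u = 0")
      case True then show ?thesis by (simp add: chi_0)
    next
      case False
      hence "u + A + (u + A) * t / u = (A + t) + (u + A * t / u)"
        by (simp add: field_simps)
      then show ?thesis using False by (simp add: chi_add[OF c2 card])
    qed
  qed simp
  also have "\<dots> = chi n (A + t) * (\<Sum>u\<in>(UNIV::'a set). chi n (u + A * t / u)) + chi n A - chi n (A + t)"
    by (simp add: sum.distrib sum_distrib_left)
  also have "(\<Sum>u\<in>(UNIV::'a set). chi n (u + A * t / u)) = kloosterman n (A * t)"
    unfolding kloosterman_def
    by (rule sum.reindex_bij_witness[where i="inverse" and j="inverse"])
       (simp_all add: divide_inverse)
  finally show ?thesis by (simp add: chi_add[OF c2 card] algebra_simps)
qed



theorem lemma4:
  fixes A B \<delta> C :: "'a::{field,finite}" and n :: nat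
  assumes "n > 0"
    and "(1::'a) + 1 = 0"
    and "card (UNIV::'a set) = 2 ^ n"
    and "A \<noteq> 0"
    and "B^2 / A^2 + B / A + \<delta> \<noteq> 0"
    and "C^2 = A * B + A^2 * \<delta>"
  shows "(abs_trace n \<delta> = 1 \<longrightarrow>
           (\<Sum>x\<in>(UNIV::'a set). chi n ((A * x + B) / (x^2 + x + \<delta>)))
             = chi n A + chi n ((B + C) / A) - kloosterman n (B + C) * chi n A)
       \<and> (abs_trace n \<delta> = 0 \<longrightarrow>
           (\<Sum>x\<in>(UNIV::'a set). chi n ((A * x + B) / (x^2 + x + \<delta>)))
             = - chi n A - chi n ((B + C) / A) + kloosterman n (B + C) * chi n A + 2)"
proof -
  note n = assms(1) and c2 = assms(2) and card = assms(3) and A = assms(4)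
  define b where "b = B / A"
  define t where "t = (B + C) / A"
  have Bb: "B = A * b" using A by (simp add: b_def)
  have t2: "t^2 = b^2 + b + \<delta>"
  proof -
    have "t^2 = (B^2 + C^2) / A^2" by (simp add: t_def power_divide c2_sq_add[OF c2])
    also have "\<dots> = (B^2 + A * B + A^2 * \<delta>) / A^2" using assms(6) by (simp add: add.assoc)
    also have "\<dots> = b^2 + b + \<delta>" using A by (simp add: b_def field_simps power2_eq_square)
    finally show ?thesis .
  qed
  have tnz: "t \<noteq> 0"
  proof
    assume "t = 0"
    hence "b^2 + b + \<delta> = 0" using t2 by simp
    thus False using assms(5) by (simp add: b_def power_divide)
  qed
  have chit: "chi n t = chi n \<delta>"
  proof -
    have "chi n t = chi n (t^2)" by (simp add: chi_sq[OF card])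
    also have "\<dots> = chi n (b^2) * chi n b * chi n \<delta>" by (simp add: t2 chi_add[OF c2 card])
    also have "\<dots> = chi n \<delta>" using chi_pm[of n b] by (auto simp: chi_sq[OF card])
    finally show ?thesis .
  qed
  have At: "A * t = B + C" using A by (simp add: t_def)
  have S: "(\<Sum>x\<in>(UNIV::'a set). chi n ((A * x + B) / (x^2 + x + \<delta>)))
        = (\<Sum>y\<in>(UNIV::'a set). chi n (A * y / (y^2 + y + t^2)))"
  proof (rule sum.reindex_bij_witness[where i="\<lambda>x. x + b" and j="\<lambda>x. x + b"])
    fix x :: 'a
    assume "x \<in> UNIV"
    have e1: "A * (x + b) = A * x + B" by (simp add: Bb algebra_simps)
    have "(x + b)^2 + (x + b) + t^2 = x^2 + x + \<delta> + (b^2 + b^2) + (b + b)"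
      by (simp add: t2 c2_sq_add[OF c2] algebra_simps)
    hence e2: "(x + b)^2 + (x + b) + t^2 = x^2 + x + \<delta>"
      by (simp add: c2_add_self[OF c2])
    show "chi n (A * (x + b) / ((x + b)^2 + (x + b) + t^2)) = chi n ((A * x + B) / (x^2 + x + \<delta>))"
      by (simp only: e1 e2)
  qed (simp_all add: add.assoc c2_add_self[OF c2])
  have main: "(\<Sum>x\<in>(UNIV::'a set). chi n ((A * x + B) / (x^2 + x + \<delta>)))
      = chi n A * chi n \<delta> * kloosterman n (B + C) - chi n A * chi n \<delta> + chi n \<delta>"
    using S main_S[OF n c2 card A tnz] chit At by simp
  show ?thesis
  proof (intro conjI impI)
    assume "abs_trace n \<delta> = 1"
    hence "chi n \<delta> = -1" by (simp add: chi_def)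
    thus "(\<Sum>x\<in>(UNIV::'a set). chi n ((A * x + B) / (x^2 + x + \<delta>)))
             = chi n A + chi n ((B + C) / A) - kloosterman n (B + C) * chi n A"
      using main chit unfolding t_def by (simp add: algebra_simps)
  next
    assume "abs_trace n \<delta> = 0"
    hence "chi n \<delta> = 1" by (simp add: chi_def)
    thus "(\<Sum>x\<in>(UNIV::'a set). chi n ((A * x + B) / (x^2 + x + \<delta>)))
             = - chi n A - chi n ((B + C) / A) + kloosterman n (B + C) * chi n A + 2"
      using main chit unfolding t_def by (simp add: algebra_simps)
  qed
qed

end
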